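(* Let $m\ge1$, $q=2^m$, let $n$ be even, and let $L$ be a $2$-linear polynomial over $\mathbb F_{q^n}$ that induces a bijection of $\mathbb F_{q^n}$, with inverse map written as \[L^{-1}(x)=\sum_{i=0}^{m-1}L_i\big(x^{2^i}\big),\] where each $L_i$ is a $q$-linear polynomial over $\mathbb F_{q^n}$. Then the following are equivalent: (a) $\mathrm{Tr}(x^{q+1})+L(x)$ is a permutation polynomial of $\mathbb F_{q^n}$; (b) $L_i(1)\in\mathbb F_{q^2}$ for $0\le i<m$; (c) $\mathbb F_q\subseteq L(\mathbb F_{q^2})$.
   Context: $\mathrm{Tr}$ denotes the trace map of $\mathbb F_{q^n}$ over $\mathbb F_q$. A $2$-linear polynomial over $\mathbb F_{q^n}$ has the form $\sum_{j=0}^{mn-1}a_jx^{2^j}$; a $q$-linear polynomial has the form $\sum_{j=0}^{n-1}a_jx^{q^j}$ ($a_j\in\mathbb F_{q^n}$); every $2$-linear polynomial can be written as $\sum_{i=0}^{m-1}L_i(x^{2^i})$ with $q$-linear $L_i$. Polynomials are regarded as maps on $\mathbb F_{q^n}$. *)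

theory Defs
  imports Main
begin

text \<open>Throughout, the ambient type 'a is a finite field with q^n = 2^(m*n) elements.\<close>

definition trace_map :: "nat \<Rightarrow> nat \<Rightarrow> 'a::field \<Rightarrow> 'a" where
  "trace_map q n x = (\<Sum>j<n. x ^ (q ^ j))"

definition lin2_poly :: "nat \<Rightarrow> nat \<Rightarrow> (nat \<Rightarrow> 'a::field) \<Rightarrow> 'a \<Rightarrow> 'a" where
  "lin2_poly m n a x = (\<Sum>j<m*n. a j * x ^ (2 ^ j))"

definition qlin_poly :: "nat \<Rightarrow> nat \<Rightarrow> (nat \<Rightarrow> 'a::field) \<Rightarrow> 'a \<Rightarrow> 'a" where
  "qlin_poly q n c x = (\<Sum>j<n. c j * x ^ (q ^ j))"

definition subfield_of_order :: "nat \<Rightarrow> 'a::field set" where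
  "subfield_of_order Q = {x. x ^ Q = x}"

end

theory Submission
  imports Defs "HOL-Computational_Algebra.Polynomial"
begin


lemma fermat: "(x::'a::{field,finite}) ^ card (UNIV::'a set) = x"
proof (cases "x = 0")
  case True
  have "card (UNIV::'a set) > 0" by (simp add: finite_UNIV_card_ge_0)
  then show ?thesis using True by (simp add: zero_power)
next
  case False
  define S where "S = (UNIV::'a set) - {0}"
  have fin: "finite S" by simp
  have bij: "bij_betw (\<lambda>y. x * y) S S"
    unfolding bij_betw_def S_def
  proof (intro conjI)
    show "inj_on (\<lambda>y. x * y) (UNIV - {0})" using False by (auto simp: inj_on_def)
    show "(\<lambda>y. x * y) ` (UNIV - {0}) = UNIV - {0}"
    proof
      show "(\<lambda>y. x * y) ` (UNIV - {0}) \<subseteq> UNIV - {0}" using False by auto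
      show "UNIV - {0} \<subseteq> (\<lambda>y. x * y) ` (UNIV - {0})"
      proof
        fix z :: 'a assume "z \<in> UNIV - {0}"
        then show "z \<in> (\<lambda>y. x * y) ` (UNIV - {0})" using False
          by (intro image_eqI[of _ _ "z / x"]) auto
      qed
    qed
  qed
  have "(\<Prod>y\<in>S. x * y) = (\<Prod>y\<in>S. y)"
    using prod.reindex_bij_betw[OF bij, of "\<lambda>y. y"] by simp
  moreover have "(\<Prod>y\<in>S. x * y) = x ^ card S * (\<Prod>y\<in>S. y)"
    by (simp add: prod.distrib)
  moreover have "(\<Prod>y\<in>S. y) \<noteq> 0" using fin by (simp add: S_def)
  ultimately have "x ^ card S = 1" by simp
  moreover have "card (UNIV::'a set) = Suc (card S)"
    unfolding S_def by (simp add: card_Diff_singleton card_gt_0_iff)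
  ultimately show ?thesis by simp
qed

lemma char2:
  assumes "card (UNIV::'a::{field,finite} set) = 2 ^ k" "k \<ge> 1"
  shows "(2::'a) = 0"
proof -
  have "(-1::'a) ^ card (UNIV::'a set) = -1" by (rule fermat)
  moreover have "even (card (UNIV::'a set))" using assms by simp
  ultimately have "(-1::'a) = 1" by simp
  then have "(1::'a) + 1 = 0" by (metis add.right_inverse)
  then show ?thesis by simp
qed

lemma c2_add_self: "(2::'a::field) = 0 \<Longrightarrow> x + x = (0::'a)"
  by (metis mult_2 mult_zero_left)

lemma c2_minus: "(2::'a::field) = 0 \<Longrightarrow> - x = (x::'a)"
  by (metis add_eq_0_iff c2_add_self)

lemma c2_eq: "(2::'a::field) = 0 \<Longrightarrow> (x + y = 0) = (x = (y::'a))"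
  by (metis add_eq_0_iff c2_minus)

lemma frob2: assumes "(2::'a::field) = 0"
  shows "((x::'a) + y) ^ (2 ^ k) = x ^ (2 ^ k) + y ^ (2 ^ k)"
proof (induction k)
  case 0 then show ?case by simp
next
  case (Suc k)
  have "(x + y) ^ (2 ^ Suc k) = ((x + y) ^ (2 ^ k))^2"
    by (simp add: power_mult[symmetric] mult.commute)
  also have "\<dots> = (x ^ (2 ^ k) + y ^ (2 ^ k))^2" using Suc by simp
  also have "\<dots> = (x ^ (2 ^ k))^2 + (y ^ (2 ^ k))^2 + 2 * (x ^ (2 ^ k)) * (y ^ (2 ^ k))"
    by (simp add: power2_eq_square algebra_simps)
  also have "\<dots> = x ^ (2 ^ Suc k) + y ^ (2 ^ Suc k)"
    using assms by (simp add: power_mult[symmetric] mult.commute)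
  finally show ?case .
qed

lemma frob2_sum: assumes "(2::'a::field) = 0"
  shows "(\<Sum>i\<in>A. (f i::'a)) ^ (2 ^ k) = (\<Sum>i\<in>A. f i ^ (2 ^ k))"
proof (induction A rule: infinite_finite_induct)
  case (insert x F) then show ?case by (simp add: frob2[OF assms])
qed (auto)

lemma frobq: assumes "(2::'a::field) = 0" "q = 2 ^ m"
  shows "((x::'a) + y) ^ (q ^ j) = x ^ (q ^ j) + y ^ (q ^ j)"
  using frob2[OF assms(1), of x y "m*j"] assms(2) by (simp add: power_mult)

lemma frobq_sum: assumes "(2::'a::field) = 0" "q = 2 ^ m"
  shows "(\<Sum>i\<in>A. (f i::'a)) ^ (q ^ j) = (\<Sum>i\<in>A. f i ^ (q ^ j))"
  using frob2_sum[OF assms(1), of f A "m*j"] assms(2) by (simp add: power_mult)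



lemma pow_qn: assumes "card (UNIV::'a::{field,finite} set) = q ^ n"
  shows "(x::'a) ^ (q ^ n) = x"
  using fermat[of x] assms by simp

lemma pow_pow_q: "((x::'a::field) ^ (q ^ j)) ^ q = x ^ (q ^ Suc j)"
  by (simp add: power_mult[symmetric] mult.commute)

lemma tr_add: assumes "(2::'a::field) = 0" "q = 2 ^ m"
  shows "trace_map q n ((x::'a) + y) = trace_map q n x + trace_map q n y"
  unfolding trace_map_def by (simp add: frobq[OF assms] sum.distrib)

lemma tr_0: "q > 0 \<Longrightarrow> trace_map q n (0::'a::field) = 0"
  unfolding trace_map_def by (simp add: power_0_left)

lemma shift_sum: assumes "f n = f 0" shows "(\<Sum>j<n. f (Suc j)) = (\<Sum>j<n. (f j::'a::comm_ring_1))"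
proof -
  have "(\<Sum>j<Suc n. f j) = f 0 + (\<Sum>j<n. f (Suc j))" by (rule sum.lessThan_Suc_shift)
  moreover have "(\<Sum>j<Suc n. f j) = (\<Sum>j<n. f j) + f n" by simp
  ultimately show ?thesis using assms by simp
qed

lemma tr_q: assumes "card (UNIV::'a::{field,finite} set) = q ^ n"
  shows "trace_map q n ((u::'a) ^ q) = trace_map q n u"
proof -
  have "trace_map q n (u ^ q) = (\<Sum>j<n. u ^ (q ^ Suc j))"
    unfolding trace_map_def by (simp add: power_mult[symmetric] mult.commute)
  also have "\<dots> = (\<Sum>j<n. u ^ (q ^ j))"
    by (rule shift_sum[where f = "\<lambda>j. u ^ (q ^ j)"]) (simp add: pow_qn[OF assms])
  finally show ?thesis unfolding trace_map_def .
qed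

lemma tr_in_K: assumes "(2::'a::{field,finite}) = 0" "q = 2 ^ m"
    "card (UNIV::'a set) = q ^ n"
  shows "trace_map q n (u::'a) ^ q = trace_map q n u"
proof -
  have "trace_map q n u ^ q = trace_map q n u ^ (q ^ 1)" by simp
  also have "\<dots> = trace_map q n (u ^ q)"
    unfolding trace_map_def frobq_sum[OF assms(1,2)]
    by (simp add: power_mult[symmetric] mult.commute)
  also have "\<dots> = trace_map q n u" by (rule tr_q[OF assms(3)])
  finally show ?thesis .
qed

lemma K_fix: "(k::'a::field) ^ q = k \<Longrightarrow> k ^ (q ^ j) = k"
proof (induction j)
  case (Suc j) then show ?case by (metis pow_pow_q)
qed simp

lemma tr_K: assumes "(2::'a::field) = 0" "even n" "(k::'a) ^ q = k"
  shows "trace_map q n k = 0"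
proof -
  have "trace_map q n k = of_nat n * k" unfolding trace_map_def using K_fix[OF assms(3)] by simp
  moreover obtain t where "n = 2 * t" using assms(2) by blast
  ultimately show ?thesis using assms(1) by simp
qed

lemma card_K_le: assumes "q \<ge> 2"
  shows "card {x::'a::field. x ^ q = x} \<le> q"
proof -
  define p :: "'a poly" where "p = monom 1 q - monom 1 1"
  have "q \<noteq> 1" "0 < q" using assms by auto
  then have cq: "coeff p q = 1" by (simp add: p_def)
  then have "p \<noteq> 0" by auto
  have "degree p \<le> q" using \<open>0 < q\<close> by (intro degree_le) (auto simp: p_def)
  moreover have "{x. x ^ q = x} = {x. poly p x = 0}" by (simp add: p_def poly_monom)
  ultimately show ?thesis using card_poly_roots_bound[OF \<open>p \<noteq> 0\<close>] by simp
qed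

lemma card_ker_le: assumes "q \<ge> 2" "n \<ge> 1"
  shows "card {x::'a::field. trace_map q n x = 0} \<le> q ^ (n - 1)"
proof -
  define p :: "'a poly" where "p = (\<Sum>j<n. monom 1 (q ^ j))"
  have inj: "inj (\<lambda>j::nat. q ^ j)" using assms(1) by (simp add: inj_on_def power_inject_exp)
  have "coeff p (q ^ (n - 1)) = (\<Sum>j<n. if q ^ j = q ^ (n - 1) then 1 else 0)"
    by (simp add: p_def coeff_sum)
  also have "\<dots> = (\<Sum>j\<in>{n - 1}. 1)"
    using assms inj by (intro sum.mono_neutral_cong_right) (auto simp: power_inject_exp)
  finally have "coeff p (q ^ (n - 1)) = 1" by simp
  then have "p \<noteq> 0" by auto
  have "degree p \<le> q ^ (n - 1)"
  proof (rule degree_le, intro allI impI)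
    fix i assume "q ^ (n - 1) < i"
    moreover have "q ^ j \<le> q ^ (n - 1)" if "j < n" for j
      using that assms by (intro power_increasing) auto
    ultimately show "coeff p i = 0" unfolding p_def coeff_sum coeff_monom
      by (intro sum.neutral ballI) (metis lessThan_iff not_le)
  qed
  moreover have "{x. trace_map q n x = 0} = {x. poly p x = 0}"
    by (simp add: p_def poly_monom poly_sum trace_map_def)
  ultimately show ?thesis using card_poly_roots_bound[OF \<open>p \<noteq> 0\<close>] by simp
qed

lemma card_additive:
  fixes T :: "'a::{ab_group_add,finite} \<Rightarrow> 'b::ab_group_add"
  assumes add: "\<And>x y. T (x + y) = T x + T y"
  shows "card (UNIV::'a set) \<le> card (range T) * card {x. T x = 0}"
proof -
  have T0: "T 0 = 0" using add[of 0 0] by simp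
  have Tm: "T (x - y) = T x - T y" for x y using add[of "x - y" y] by simp
  have "UNIV = (\<Union>v\<in>range T. T -` {v})" by auto
  then have "card (UNIV::'a set) = card (\<Union>v\<in>range T. T -` {v})" by simp
  also have "\<dots> \<le> (\<Sum>v\<in>range T. card (T -` {v}))"
    by (rule card_UN_le) simp
  also have "\<dots> \<le> (\<Sum>v\<in>range T. card {x. T x = 0})"
  proof (rule sum_mono)
    fix v assume "v \<in> range T"
    then obtain x0 where x0: "T x0 = v" by auto
    have "inj_on (\<lambda>x. x - x0) (T -` {v})" by (auto simp: inj_on_def)
    moreover have "(\<lambda>x. x - x0) ` (T -` {v}) \<subseteq> {x. T x = 0}" using x0 by (auto simp: Tm)
    ultimately show "card (T -` {v}) \<le> card {x. T x = 0}"
      by (intro card_inj_on_le) auto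
  qed
  finally show ?thesis by simp
qed

lemma range_tr: assumes "(2::'a::{field,finite}) = 0" "q = 2 ^ m" "m \<ge> 1" "n \<ge> 1"
    "card (UNIV::'a set) = q ^ n"
  shows "range (trace_map q n :: 'a \<Rightarrow> 'a) = {x. x ^ q = x}" and "card {x::'a. x ^ q = x} = q"
proof -
  have q2: "q \<ge> 2" using assms(2,3) power_increasing[of 1 m "2::nat"] by simp
  have sub: "range (trace_map q n :: 'a \<Rightarrow> 'a) \<subseteq> {x. x ^ q = x}"
    using tr_in_K[OF assms(1,2,5)] by auto
  have h1: "q ^ n \<le> card (range (trace_map q n :: 'a \<Rightarrow> 'a)) * card {x::'a. trace_map q n x = 0}"
    using card_additive[of "trace_map q n :: 'a \<Rightarrow> 'a"] tr_add[OF assms(1,2)] assms(5) by simp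
  have h2: "card (range (trace_map q n :: 'a \<Rightarrow> 'a)) * card {x::'a. trace_map q n x = 0} \<le> card (range (trace_map q n :: 'a \<Rightarrow> 'a)) * q ^ (n - 1)"
    using card_ker_le[OF q2 assms(4), where 'a='a] by (intro mult_le_mono2)
  have h3: "q ^ n = q * q ^ (n - 1)" using assms(4) by (cases n) auto
  have "q * q ^ (n - 1) \<le> card (range (trace_map q n :: 'a \<Rightarrow> 'a)) * q ^ (n - 1)"
    using h1 h2 h3 by linarith
  then have ge: "q \<le> card (range (trace_map q n :: 'a \<Rightarrow> 'a))" using q2 by simp
  have le: "card {x::'a. x ^ q = x} \<le> q" by (rule card_K_le[OF q2])
  have "card (range (trace_map q n :: 'a \<Rightarrow> 'a)) \<le> card {x::'a. x ^ q = x}"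
    using sub by (intro card_mono) auto
  with ge le show "card {x::'a. x ^ q = x} = q" by simp
  show "range (trace_map q n :: 'a \<Rightarrow> 'a) = {x. x ^ q = x}"
    using sub ge le \<open>card (range _) \<le> _\<close> by (intro card_subset_eq) auto
qed



locale ctx =
  fixes m n q :: nat and a :: "nat \<Rightarrow> 'a::{field,finite}"
  assumes c2: "(2::'a) = 0" and q: "q = 2 ^ m" and m: "m \<ge> 1" and n1: "n \<ge> 1"
    and ev: "even n" and card: "card (UNIV::'a set) = q ^ n"
    and bij: "bij (lin2_poly m n a)"
begin

abbreviation "Tr \<equiv> (trace_map q n :: 'a \<Rightarrow> 'a)"
abbreviation "L \<equiv> lin2_poly m n a"
abbreviation "KK \<equiv> {x::'a. x ^ q = x}"
abbreviation "EE \<equiv> {x::'a. x ^ (q ^ 2) = x}"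
definition "w d = d ^ q + d ^ (q ^ (n - 1))"

lemma q2: "q \<ge> 2" using q m power_increasing[of 1 m "2::nat"] by simp

lemma L_add: "L (x + y) = L x + L y"
  unfolding lin2_poly_def by (simp add: frob2[OF c2] sum.distrib distrib_left)

lemma L0: "L 0 = 0" using L_add[of 0 0] by (metis add.right_neutral add_left_cancel)

lemma inj_L: "inj L" using bij by (simp add: bij_def)

lemma Tr_add: "Tr (x + y) = Tr x + Tr y" by (rule tr_add[OF c2 q])

lemma Tr0: "Tr 0 = 0" using Tr_add[of 0 0] by (metis add.right_neutral add_left_cancel)

lemma Tr_K: "Tr x \<in> KK" using tr_in_K[OF c2 q card] by simp

lemma K_add: "x \<in> KK \<Longrightarrow> y \<in> KK \<Longrightarrow> x + y \<in> KK"
  using frobq[OF c2 q, of x y 1] by simp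

lemma Q_shift: "Tr ((x + d) ^ (q + 1)) = Tr (x ^ (q + 1)) + Tr (d ^ (q + 1)) + Tr (x * w d)"
proof -
  have "(x + d) ^ (q + 1) = (x + d) ^ (q ^ 1) * (x + d)" by simp
  also have "\<dots> = (x ^ q + d ^ q) * (x + d)" using frobq[OF c2 q, of x d 1] by simp
  also have "\<dots> = x ^ (q + 1) + x ^ q * d + d ^ q * x + d ^ (q + 1)"
    by (simp add: algebra_simps)
  finally have e1: "Tr ((x + d) ^ (q + 1)) = Tr (x ^ (q + 1)) + Tr (x ^ q * d) + Tr (d ^ q * x) + Tr (d ^ (q + 1))"
    by (simp add: Tr_add)
  have "(x * d ^ (q ^ (n - 1))) ^ q = x ^ q * d ^ (q ^ Suc (n - 1))"
    by (simp add: power_mult_distrib pow_pow_q)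
  also have "\<dots> = x ^ q * d" using n1 pow_qn[OF card, of d] by simp
  finally have "Tr (x ^ q * d) = Tr (x * d ^ (q ^ (n - 1)))"
    using tr_q[OF card, of "x * d ^ (q ^ (n - 1))"] by simp
  then have "Tr (x ^ q * d) + Tr (d ^ q * x) = Tr (x * w d)"
    unfolding w_def by (simp add: Tr_add[symmetric] algebra_simps)
  with e1 show ?thesis by (simp add: algebra_simps)
qed

lemma w_zero_iff: "(w d = 0) = (d \<in> EE)"
proof
  assume "w d = 0"
  then have h: "d ^ q = d ^ (q ^ (n - 1))" unfolding w_def using c2_eq[OF c2] by blast
  have "d ^ (q ^ 2) = (d ^ q) ^ q" by (simp add: power2_eq_square power_mult)
  also have "\<dots> = d ^ (q ^ Suc (n - 1))" using h by (simp add: pow_pow_q)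
  also have "\<dots> = d" using n1 pow_qn[OF card, of d] by simp
  finally show "d \<in> EE" by simp
next
  assume "d \<in> EE"
  then have h: "d ^ (q ^ 2) = d" by simp
  have h2: "d ^ (q ^ (2 * k)) = d" for k
  proof (induction k)
    case (Suc k)
    have "d ^ (q ^ (2 * Suc k)) = (d ^ (q ^ (2 * k))) ^ (q ^ 2)"
      by (simp add: power_mult[symmetric] power_add[symmetric] mult.commute)
    then show ?case using Suc h by simp
  qed simp
  obtain t where t: "n = 2 * t" using ev by blast
  define k where "k = t - 1"
  have k: "n - 1 = 2 * k + 1" using t n1 unfolding k_def by simp
  have "d ^ (q ^ (n - 1)) = (d ^ (q ^ (2 * k))) ^ q"
    unfolding k by (simp add: power_mult[symmetric] mult.commute)
  then have hh: "d ^ (q ^ (n - 1)) = d ^ q" using h2 by simp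
  show "w d = 0" unfolding w_def hh by (rule c2_add_self[OF c2])
qed

lemma Q_E: assumes "d \<in> EE" shows "Tr (d ^ (q + 1)) = 0"
proof -
  have "(d ^ (q + 1)) ^ q = (d ^ q) ^ q * d ^ q"
    by (simp add: power_mult[symmetric] power_add[symmetric] algebra_simps)
  also have "(d ^ q) ^ q = d" using assms by (simp add: power2_eq_square power_mult)
  finally have "(d ^ (q + 1)) ^ q = d ^ (q + 1)" by (simp add: algebra_simps)
  then show ?thesis using tr_K[OF c2 ev] by blast
qed

lemma surj_tr: assumes "v \<noteq> 0" "k \<in> KK" shows "\<exists>x. Tr (x * v) = k"
proof -
  have "k \<in> range Tr" using range_tr(1)[OF c2 q m n1 card] assms(2) by simp
  then obtain y where "Tr y = k" by auto
  then show ?thesis using assms(1) by (intro exI[of _ "y / v"]) simp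
qed

lemma fs: "Tr ((x + d) ^ (q + 1)) + L (x + d) = (Tr (x ^ (q + 1)) + L x) + (Tr (d ^ (q + 1)) + Tr (x * w d) + L d)"
  unfolding Q_shift L_add by (simp only: ac_simps)

lemma yd: "y = x + (y + x)" for x y :: 'a
  using c2_add_self[OF c2, of x] by (metis add.assoc add.commute add_0)

lemma t1: "(A + B) + (C + D) + (A + C) = B + D" for A B C D :: 'a
proof -
  have "(A + B) + (C + D) + (A + C) = (A + A) + (C + C) + (B + D)" by (simp only: ac_simps)
  then show ?thesis by (simp only: c2_add_self[OF c2] add_0)
qed


lemma t2: "A + (A + B) + B = 0" for A B :: 'a
proof -
  have "A + (A + B) + B = (A + A) + (B + B)" by (simp only: ac_simps)
  then show ?thesis by (simp only: c2_add_self[OF c2] add_0)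
qed

lemma a_iff_c:
  "inj (\<lambda>x. Tr (x ^ (q + 1)) + L x) = (KK \<subseteq> L ` EE)"
proof
  let ?f = "\<lambda>x. Tr (x ^ (q + 1)) + L x"
  assume inj: "inj ?f"
  show "KK \<subseteq> L ` EE"
  proof
    fix k assume k: "k \<in> KK"
    define d where "d = inv L k"
    have Ld: "L d = k" unfolding d_def using bij by (simp add: bij_def surj_f_inv_f)
    have "d \<in> EE"
    proof (rule ccontr)
      assume "d \<notin> EE"
      then have "w d \<noteq> 0" using w_zero_iff by blast
      moreover have "Tr (d ^ (q + 1)) + k \<in> KK" using K_add[OF Tr_K k] .
      ultimately obtain x where x: "Tr (x * w d) = Tr (d ^ (q + 1)) + k" using surj_tr by blast
      have "Tr (d ^ (q + 1)) + Tr (x * w d) + L d = 0"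
        unfolding x Ld by (rule t2)
      then have "?f (x + d) = ?f x" using fs[of x d] by simp
      then have "x + d = x" using injD[OF inj, of "x + d" x] by blast
      then have "d = 0" by simp
      then show False using \<open>d \<notin> EE\<close> q2 by (simp add: power_0_left)
    qed
    then show "k \<in> L ` EE" using Ld by blast
  qed
next
  let ?f = "\<lambda>x. Tr (x ^ (q + 1)) + L x"
  assume sub: "KK \<subseteq> L ` EE"
  show "inj ?f"
  proof (rule injI, rule ccontr)
    fix x y assume eq: "?f x = ?f y" and ne: "x \<noteq> y"
    define d where "d = y + x"
    have yd: "y = x + d" unfolding d_def by (rule yd)
    have d0: "d \<noteq> 0" unfolding d_def using ne c2_eq[OF c2, of y x] by blast
    have "?f x + (Tr (d ^ (q + 1)) + Tr (x * w d) + L d) = ?f x + 0"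
      using eq fs[of x d] yd by simp
    then have S0: "(Tr (d ^ (q + 1)) + Tr (x * w d)) + L d = 0" by (rule add_left_imp_eq)
    have Ld: "L d = Tr (d ^ (q + 1)) + Tr (x * w d)"
      using c2_eq[OF c2, of "Tr (d ^ (q + 1)) + Tr (x * w d)" "L d"] S0 by simp
    then have "L d \<in> KK" using K_add[OF Tr_K Tr_K] by simp
    then obtain e where e: "e \<in> EE" "L d = L e" using sub by blast
    then have "d = e" using inj_L by (metis injD)
    then have "d \<in> EE" using e by blast
    then have "w d = 0" "Tr (d ^ (q + 1)) = 0" using Q_E w_zero_iff by blast+
    then have "L d = 0" using Ld Tr0 by simp
    then have "d = 0" using L0 inj_L by (metis injD)
    then show False using d0 by simp
  qed
qed


lemma qlin_K: assumes "u \<in> KK" shows "qlin_poly q n c u = u * qlin_poly q n c 1"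
proof -
  have hu: "u ^ q = u" using assms by simp
  have "qlin_poly q n c u = (\<Sum>j<n. u * c j)"
    unfolding qlin_poly_def by (intro sum.cong refl) (simp only: K_fix[OF hu] mult.commute)
  also have "\<dots> = u * qlin_poly q n c 1"
    unfolding qlin_poly_def by (simp only: power_one mult_1_right sum_distrib_left)
  finally show ?thesis .
qed

lemma K_pow2: assumes "k \<in> KK" shows "k ^ (2 ^ i) \<in> KK"
proof -
  have "(k ^ (2 ^ i)) ^ q = (k ^ q) ^ (2 ^ i)" by (simp only: power_mult[symmetric] mult.commute)
  then show ?thesis using assms by simp
qed

lemma K_E: assumes "k \<in> KK" shows "k \<in> EE"
proof -
  have h: "k ^ (q ^ 2) = (k ^ q) ^ q" by (simp only: power2_eq_square power_mult)
  have hu: "k ^ q = k" using assms by simp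
  have "k ^ (q ^ 2) = k" by (simp only: h hu)
  then show ?thesis by simp
qed

lemma c_iff: "(KK \<subseteq> L ` EE) = (\<forall>k\<in>KK. inv L k \<in> EE)"
proof
  assume "KK \<subseteq> L ` EE"
  show "\<forall>k\<in>KK. inv L k \<in> EE"
  proof
    fix k assume "k \<in> KK"
    then obtain e where "e \<in> EE" "k = L e" using \<open>KK \<subseteq> L ` EE\<close> by blast
    then show "inv L k \<in> EE" using inv_f_f[OF inj_L, of e] by simp
  qed
next
  assume h: "\<forall>k\<in>KK. inv L k \<in> EE"
  show "KK \<subseteq> L ` EE"
  proof
    fix k assume "k \<in> KK"
    then have "inv L k \<in> EE" using h by blast
    moreover have "L (inv L k) = k" using bij by (simp add: bij_def surj_f_inv_f)
    ultimately show "k \<in> L ` EE" by (intro image_eqI[of k L "inv L k"]) simp_all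
  qed
qed

lemma b_iff_c:
  fixes b :: "nat \<Rightarrow> nat \<Rightarrow> 'a"
  assumes inv_repr: "\<And>x. inv L x = (\<Sum>i<m. qlin_poly q n (b i) (x ^ (2 ^ i)))"
  shows "(\<forall>i<m. qlin_poly q n (b i) 1 \<in> EE) = (KK \<subseteq> L ` EE)"
proof -
  define C where "C i = qlin_poly q n (b i) 1" for i
  have invK: "inv L k = (\<Sum>i<m. k ^ (2 ^ i) * C i)" if "k \<in> KK" for k
    unfolding inv_repr C_def using qlin_K[OF K_pow2[OF that]] by simp
  have Esum: "(\<Sum>i<m. (f i :: 'a)) ^ (q ^ 2) = (\<Sum>i<m. f i ^ (q ^ 2))" for f
    by (rule frobq_sum[OF c2 q])
  show ?thesis unfolding c_iff C_def[symmetric]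
  proof
    assume hC: "\<forall>i<m. C i \<in> EE"
    show "\<forall>k\<in>KK. inv L k \<in> EE"
    proof
      fix k assume k: "k \<in> KK"
      have "(\<Sum>i<m. k ^ (2 ^ i) * C i) ^ (q ^ 2) = (\<Sum>i<m. (k ^ (2 ^ i)) ^ (q ^ 2) * C i ^ (q ^ 2))"
        unfolding Esum by (simp add: power_mult_distrib)
      also have "\<dots> = (\<Sum>i<m. k ^ (2 ^ i) * C i)"
        using hC K_E[OF K_pow2[OF k]] by (intro sum.cong) auto
      finally show "inv L k \<in> EE" using invK[OF k] by simp
    qed
  next
    assume h: "\<forall>k\<in>KK. inv L k \<in> EE"
    define D where "D i = C i ^ (q ^ 2) + C i" for i
    define P where "P = (\<Sum>i<m. monom (D i) (2 ^ i))"
    have roots: "KK \<subseteq> {x. poly P x = 0}"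
    proof
      fix k assume k: "k \<in> KK"
      have "inv L k ^ (q ^ 2) = inv L k" using h k by blast
      then have "(\<Sum>i<m. k ^ (2 ^ i) * C i) ^ (q ^ 2) = (\<Sum>i<m. k ^ (2 ^ i) * C i)"
        unfolding invK[OF k] .
      moreover have "(\<Sum>i<m. k ^ (2 ^ i) * C i) ^ (q ^ 2) = (\<Sum>i<m. k ^ (2 ^ i) * C i ^ (q ^ 2))"
        unfolding Esum using K_E[OF K_pow2[OF k]] by (simp add: power_mult_distrib)
      ultimately have "(\<Sum>i<m. k ^ (2 ^ i) * C i ^ (q ^ 2)) + (\<Sum>i<m. k ^ (2 ^ i) * C i) = 0"
        using c2_add_self[OF c2] by metis
      then have "poly P k = 0"
        unfolding P_def D_def poly_sum poly_monom by (simp add: sum.distrib[symmetric] algebra_simps)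
      then show "k \<in> {x. poly P x = 0}" by simp
    qed
    have P0: "P = 0"
    proof (rule ccontr)
      assume "P \<noteq> 0"
      have "degree P \<le> 2 ^ (m - 1)"
      proof (rule degree_le, intro allI impI)
        fix j :: nat assume j: "2 ^ (m - 1) < j"
        have "2 ^ i \<le> (2::nat) ^ (m - 1)" if "i < m" for i
          using that by (intro power_increasing) auto
        then show "coeff P j = 0" unfolding P_def coeff_sum coeff_monom using j
          by (intro sum.neutral ballI) (metis lessThan_iff not_le)
      qed
      moreover have "2 ^ (m - 1) < q" using q m by (cases m) auto
      moreover have "card KK \<le> card {x. poly P x = 0}" using roots by (intro card_mono) auto
      moreover have "card KK = q" by (rule range_tr(2)[OF c2 q m n1 card])
      ultimately show False using card_poly_roots_bound[OF \<open>P \<noteq> 0\<close>] by linarith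
    qed
    show "\<forall>i<m. C i \<in> EE"
    proof (intro allI impI)
      fix i assume i: "i < m"
      have "coeff P (2 ^ i) = (\<Sum>j<m. if 2 ^ j = (2::nat) ^ i then D j else 0)"
        unfolding P_def coeff_sum coeff_monom by simp
      also have "\<dots> = (\<Sum>j\<in>{i}. D j)"
        using i by (intro sum.mono_neutral_cong_right) auto
      finally have "D i = 0" using P0 by simp
      then show "C i \<in> EE" unfolding D_def using c2_eq[OF c2] by simp
    qed
  qed
qed

end

theorem mainTheorem13:
  fixes m n q :: nat and a :: "nat \<Rightarrow> 'a::{field,finite}"
    and b :: "nat \<Rightarrow> nat \<Rightarrow> 'a"
  assumes m: "m \<ge> 1"
    and q: "q = 2 ^ m"
    and n: "even n"
    and card: "card (UNIV :: 'a set) = q ^ n"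
    and bij: "bij (lin2_poly m n a)"
    and inv_repr: "\<And>x. inv (lin2_poly m n a) x
                      = (\<Sum>i<m. qlin_poly q n (b i) (x ^ (2 ^ i)))"
  shows "(bij (\<lambda>x. trace_map q n (x ^ (q + 1)) + lin2_poly m n a x)
            \<longleftrightarrow> (\<forall>i<m. qlin_poly q n (b i) 1 \<in> subfield_of_order (q ^ 2)))
       \<and> ((\<forall>i<m. qlin_poly q n (b i) 1 \<in> subfield_of_order (q ^ 2))
            \<longleftrightarrow> subfield_of_order q \<subseteq> lin2_poly m n a ` subfield_of_order (q ^ 2))"
proof -
  have "{0::'a, 1} \<subseteq> UNIV" by simp
  then have "card {0::'a, 1} \<le> card (UNIV :: 'a set)" by (intro card_mono) auto
  then have c2le: "2 \<le> card (UNIV :: 'a set)" by simp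
  have n1: "n \<ge> 1"
  proof (rule ccontr)
    assume "\<not> n \<ge> 1" then have "n = 0" by simp
    then show False using c2le card by simp
  qed
  have cardmn: "card (UNIV :: 'a set) = 2 ^ (m * n)" using card q by (simp add: power_mult)
  have mn: "m * n \<ge> 1" using m n1 by simp
  have c2: "(2::'a) = 0" by (rule char2[OF cardmn mn])
  interpret ctx m n q a
    by unfold_locales (use c2 q m n1 n card bij in auto)
  have bi: "bij f = inj f" for f :: "'a \<Rightarrow> 'a"
    by (auto simp: bij_def finite_UNIV_inj_surj)
  have E: "subfield_of_order (q ^ 2) = EE" and K: "subfield_of_order q = KK"
    by (simp_all add: subfield_of_order_def)
  show ?thesis
    unfolding bi E K a_iff_c b_iff_c[OF inv_repr] by simp
qed

end
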